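(* Let $G=(V,E)$ be a naturally ordered DAG. The saturation ideal $I_G:S_G\subseteq\mathbb R[\Sigma]$ is prime.
   Context: $\mathbb R[\Sigma]$ is the polynomial ring in symmetric variables $\sigma_{ij}=\sigma_{ji}$, $i,j\in V=[p]$; $ij\in E\Rightarrow i<j$. $I_G$ is the ideal generated by $|\Sigma_{ij|\mathrm{pa}(j)}|$ for $i<j$ with $ij\notin E$, where $\Sigma_{ij|K}$ has rows $(i,K)$ and columns $(j,K)$. $S_G=\{\prod_{i\in V}|\Sigma_{\mathrm{pa}(i)}|^{k_i}:k_i\in\mathbb N\}$ and $I:S=\{f:fs\in I\text{ for some }s\in S\}$. *)

theory Defs
  imports "HOL-Library.Poly_Mapping" "Jordan_Normal_Form.Determinant"
begin

text \<open>Polynomials with real coefficients in variables indexed by pairs of naturals: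
  a polynomial is a finitely supported map from monomials (finitely supported exponent
  vectors) to coefficients.\<close>
type_synonym rpoly = "((nat \<times> nat) \<Rightarrow>\<^sub>0 nat) \<Rightarrow>\<^sub>0 real"

text \<open>The symmetric variable sigma_ij = sigma_ji, represented by the variable (min i j, max i j).\<close>
definition sigma :: "nat \<Rightarrow> nat \<Rightarrow> rpoly" where
  "sigma i j = Poly_Mapping.single (Poly_Mapping.single (min i j, max i j) 1) 1"

definition RSigma :: "nat \<Rightarrow> rpoly set" where
  "RSigma p = {f. \<forall>m \<in> Poly_Mapping.keys f.
      Poly_Mapping.keys m \<subseteq> {(i, j). 1 \<le> i \<and> i \<le> j \<and> j \<le> p}}"

definition subdet :: "nat list \<Rightarrow> nat list \<Rightarrow> rpoly" where
  "subdet rs cs = det (mat (length rs) (length cs) (\<lambda>(r, c). sigma (rs ! r) (cs ! c)))"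

definition pa :: "(nat \<times> nat) set \<Rightarrow> nat \<Rightarrow> nat set" where
  "pa E j = {i. (i, j) \<in> E}"

definition cond_det :: "nat \<Rightarrow> nat \<Rightarrow> nat set \<Rightarrow> rpoly" where
  "cond_det i j K = subdet (i # sorted_list_of_set K) (j # sorted_list_of_set K)"

text \<open>|Sigma_K| (principal minor; equals 1 for K empty).\<close>
definition princ_det :: "nat set \<Rightarrow> rpoly" where
  "princ_det K = subdet (sorted_list_of_set K) (sorted_list_of_set K)"

definition nat_ordered_dag :: "nat \<Rightarrow> (nat \<times> nat) set \<Rightarrow> bool" where
  "nat_ordered_dag p E \<longleftrightarrow> E \<subseteq> {(i, j). 1 \<le> i \<and> i < j \<and> j \<le> p}"

definition is_ideal :: "'a::comm_ring_1 set \<Rightarrow> 'a set \<Rightarrow> bool" where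
  "is_ideal R I \<longleftrightarrow> I \<subseteq> R \<and> 0 \<in> I \<and> (\<forall>x\<in>I. \<forall>y\<in>I. x + y \<in> I)
      \<and> (\<forall>r\<in>R. \<forall>x\<in>I. r * x \<in> I)"

definition ideal_gen :: "'a::comm_ring_1 set \<Rightarrow> 'a set \<Rightarrow> 'a set" where
  "ideal_gen R X = \<Inter> {I. is_ideal R I \<and> X \<subseteq> I}"

definition is_prime_ideal :: "'a::comm_ring_1 set \<Rightarrow> 'a set \<Rightarrow> bool" where
  "is_prime_ideal R I \<longleftrightarrow> is_ideal R I \<and> I \<noteq> R
      \<and> (\<forall>a\<in>R. \<forall>b\<in>R. a * b \<in> I \<longrightarrow> a \<in> I \<or> b \<in> I)"

definition saturation :: "'a::comm_ring_1 set \<Rightarrow> 'a set \<Rightarrow> 'a set \<Rightarrow> 'a set" where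
  "saturation R I S = {f \<in> R. \<exists>s\<in>S. f * s \<in> I}"

definition I_G :: "nat \<Rightarrow> (nat \<times> nat) set \<Rightarrow> rpoly set" where
  "I_G p E = ideal_gen (RSigma p)
     {cond_det i j (pa E j) | i j. 1 \<le> i \<and> i < j \<and> j \<le> p \<and> (i, j) \<notin> E}"

definition S_G :: "nat \<Rightarrow> (nat \<times> nat) set \<Rightarrow> rpoly set" where
  "S_G p E = {\<Prod>i\<in>{1..p}. princ_det (pa E i) ^ k i | k :: nat \<Rightarrow> nat. True}"

end

theory Submission
  imports Defs
begin


definition Rv :: "(nat\<times>nat) set \<Rightarrow> rpoly set" where
  "Rv V = {f. \<forall>m \<in> Poly_Mapping.keys f. Poly_Mapping.keys m \<subseteq> V}"

definition var :: "nat\<times>nat \<Rightarrow> rpoly" where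
  "var v = Poly_Mapping.single (Poly_Mapping.single v 1) 1"

definition mon :: "(nat\<times>nat \<Rightarrow> real) \<Rightarrow> ((nat\<times>nat) \<Rightarrow>\<^sub>0 nat) \<Rightarrow> real" where
  "mon x m = (\<Prod>v\<in>Poly_Mapping.keys m. x v ^ Poly_Mapping.lookup m v)"

definition ev :: "(nat\<times>nat \<Rightarrow> real) \<Rightarrow> rpoly \<Rightarrow> real" where
  "ev x f = (\<Sum>m\<in>Poly_Mapping.keys f. Poly_Mapping.lookup f m * mon x m)"

lemma mon_superset: "finite U \<Longrightarrow> Poly_Mapping.keys m \<subseteq> U \<Longrightarrow>
   mon x m = (\<Prod>v\<in>U. x v ^ Poly_Mapping.lookup m v)"
  unfolding mon_def
  by (rule prod.mono_neutral_left) (auto simp: in_keys_iff)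

lemma mon_add: "mon x (a + b) = mon x a * mon x b"
proof -
  let ?U = "Poly_Mapping.keys a \<union> Poly_Mapping.keys b"
  have f: "finite ?U" by simp
  have "mon x (a+b) = (\<Prod>v\<in>?U. x v ^ Poly_Mapping.lookup (a+b) v)"
    by (rule mon_superset[OF f]) (rule keys_add)
  also have "\<dots> = (\<Prod>v\<in>?U. x v ^ Poly_Mapping.lookup a v) * (\<Prod>v\<in>?U. x v ^ Poly_Mapping.lookup b v)"
    by (simp add: lookup_add power_add prod.distrib)
  also have "\<dots> = mon x a * mon x b"
    by (simp add: mon_superset[OF f])
  finally show ?thesis .
qed

lemma mon_zero[simp]: "mon x 0 = 1" by (simp add: mon_def)

lemma ev_superset: "finite U \<Longrightarrow> Poly_Mapping.keys f \<subseteq> U \<Longrightarrow>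
   ev x f = (\<Sum>m\<in>U. Poly_Mapping.lookup f m * mon x m)"
  unfolding ev_def
  by (rule sum.mono_neutral_left) (auto simp: in_keys_iff)

lemma ev_add: "ev x (f + g) = ev x f + ev x g"
proof -
  let ?U = "Poly_Mapping.keys f \<union> Poly_Mapping.keys g"
  have fU: "finite ?U" by simp
  have "ev x (f+g) = (\<Sum>m\<in>?U. Poly_Mapping.lookup (f+g) m * mon x m)"
    by (rule ev_superset[OF fU]) (rule keys_add)
  also have "\<dots> = ev x f + ev x g"
    by (simp add: lookup_add distrib_right sum.distrib ev_superset[OF fU])
  finally show ?thesis .
qed

lemma ev_zero[simp]: "ev x 0 = 0" by (simp add: ev_def)

lemma ev_single: "ev x (Poly_Mapping.single m c) = c * mon x m"
  by (cases "c = 0") (auto simp: ev_def)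

lemma ev_sum: "ev x (sum F A) = (\<Sum>a\<in>A. ev x (F a))"
  by (induct A rule: infinite_finite_induct) (auto simp: ev_add)

lemma poly_as_sum: "f = (\<Sum>m\<in>Poly_Mapping.keys f. Poly_Mapping.single m (Poly_Mapping.lookup f m))"
proof (rule poly_mapping_eqI)
  fix k
  show "Poly_Mapping.lookup f k = Poly_Mapping.lookup (\<Sum>m\<in>Poly_Mapping.keys f. Poly_Mapping.single m (Poly_Mapping.lookup f m)) k"
    by (cases "k \<in> Poly_Mapping.keys f")
       (simp_all add: lookup_sum lookup_single when_def in_keys_iff)
qed

lemma ev_mult: "ev x (f * g) = ev x f * ev x g"
proof -
  have "f * g = (\<Sum>a\<in>Poly_Mapping.keys f. \<Sum>b\<in>Poly_Mapping.keys g.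
      Poly_Mapping.single a (Poly_Mapping.lookup f a) * Poly_Mapping.single b (Poly_Mapping.lookup g b))"
    unfolding sum_product[symmetric] by (simp only: poly_as_sum[symmetric])
  then have "ev x (f*g) = (\<Sum>a\<in>Poly_Mapping.keys f. \<Sum>b\<in>Poly_Mapping.keys g.
      (Poly_Mapping.lookup f a * mon x a) * (Poly_Mapping.lookup g b * mon x b))"
    by (simp add: ev_sum mult_single ev_single mon_add mult_ac)
  also have "\<dots> = ev x f * ev x g" by (simp add: ev_def sum_product)
  finally show ?thesis .
qed

lemma ev_one[simp]: "ev x 1 = 1"
  by (metis ev_single mon_zero mult_1 single_one)

interpretation ev_hom: comm_ring_hom "ev x"
  by unfold_locales (auto simp: ev_add ev_mult)

lemma ev_var[simp]: "ev x (var v) = x v"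
  by (simp add: var_def ev_single mon_def)



lemma Rv_iff: "f \<in> Rv V \<longleftrightarrow> (\<forall>m \<in> Poly_Mapping.keys f. Poly_Mapping.keys m \<subseteq> V)"
  by (simp add: Rv_def)

lemma Rv_mono: "V \<subseteq> W \<Longrightarrow> f \<in> Rv V \<Longrightarrow> f \<in> Rv W"
  unfolding Rv_def by blast

lemma Rv_zero[simp]: "0 \<in> Rv V" by (simp add: Rv_def)

lemma Rv_single: "Poly_Mapping.keys m \<subseteq> V \<Longrightarrow> Poly_Mapping.single m c \<in> Rv V"
  by (simp add: Rv_def)

lemma Rv_one[simp]: "1 \<in> Rv V"
  using Rv_single[of 0 V 1] by simp

lemma Rv_var: "v \<in> V \<Longrightarrow> var v \<in> Rv V"
  unfolding var_def by (rule Rv_single) simp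

lemma Rv_add: assumes "f \<in> Rv V" "g \<in> Rv V" shows "f + g \<in> Rv V"
  unfolding Rv_iff
proof
  fix m assume "m \<in> Poly_Mapping.keys (f + g)"
  then have "m \<in> Poly_Mapping.keys f \<union> Poly_Mapping.keys g" by (rule subsetD[OF keys_add])
  then show "Poly_Mapping.keys m \<subseteq> V" using assms unfolding Rv_iff by (elim UnE) simp_all
qed

lemma keys_uminus': "Poly_Mapping.keys (- f) = Poly_Mapping.keys (f :: rpoly)"
  by (auto simp: in_keys_iff)

lemma Rv_uminus: "f \<in> Rv V \<Longrightarrow> - f \<in> Rv V"
  unfolding Rv_iff keys_uminus' .

lemma Rv_diff: "f \<in> Rv V \<Longrightarrow> g \<in> Rv V \<Longrightarrow> f - g \<in> Rv V"
  unfolding diff_conv_add_uminus by (intro Rv_add Rv_uminus)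

lemma Rv_mult: "f \<in> Rv V \<Longrightarrow> g \<in> Rv V \<Longrightarrow> f * g \<in> Rv V"
proof (unfold Rv_iff, intro ballI)
  fix m assume f: "\<forall>m\<in>Poly_Mapping.keys f. Poly_Mapping.keys m \<subseteq> V"
    and g: "\<forall>m\<in>Poly_Mapping.keys g. Poly_Mapping.keys m \<subseteq> V"
    and m: "m \<in> Poly_Mapping.keys (f * g)"
  from m keys_mult obtain a b where "m = a + b" "a \<in> Poly_Mapping.keys f" "b \<in> Poly_Mapping.keys g"
    by blast
  have "Poly_Mapping.keys m \<subseteq> Poly_Mapping.keys a \<union> Poly_Mapping.keys b"
    unfolding \<open>m = a + b\<close> by (rule keys_add)
  then show "Poly_Mapping.keys m \<subseteq> V" using f g \<open>a \<in> _\<close> \<open>b \<in> _\<close> by (meson Un_least order_trans)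
qed

lemma Rv_power: "f \<in> Rv V \<Longrightarrow> f ^ n \<in> Rv V"
  by (induct n) (auto intro: Rv_mult)

lemma Rv_sum: "(\<And>a. a \<in> A \<Longrightarrow> F a \<in> Rv V) \<Longrightarrow> sum F A \<in> Rv V"
  by (induct A rule: infinite_finite_induct) (auto intro: Rv_add)

lemma Rv_prod: "(\<And>a. a \<in> A \<Longrightarrow> F a \<in> Rv V) \<Longrightarrow> prod F A \<in> Rv V"
  by (induct A rule: infinite_finite_induct) (auto intro: Rv_mult)

lemma Rv_of_int: "(of_int k :: rpoly) \<in> Rv V"
  using Rv_single[of 0 V "of_int k"] by simp

lemma Rv_det: assumes "M \<in> carrier_mat n n" "\<And>i j. i < n \<Longrightarrow> j < n \<Longrightarrow> M $$ (i,j) \<in> Rv V"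
  shows "det M \<in> Rv V"
  unfolding det_def'[OF assms(1)]
proof (rule Rv_sum)
  fix p assume "p \<in> {p. p permutes {0..<n}}"
  then have "\<And>i. i < n \<Longrightarrow> p i < n" by (simp add: permutes_in_image)
  then show "signof p * (\<Prod>i = 0..<n. M $$ (i, p i)) \<in> Rv V"
    by (intro Rv_mult Rv_of_int Rv_prod) (auto intro: assms(2))
qed

lemma var_power: "var v ^ e = Poly_Mapping.single (Poly_Mapping.single v e) 1"
  by (induct e) (simp_all add: var_def mult_single single_add[symmetric] add.commute)



lemma monomial_split:
  fixes m :: "(nat\<times>nat) \<Rightarrow>\<^sub>0 nat" and x :: "nat\<times>nat" and c :: real
  defines "m' \<equiv> m - Poly_Mapping.single x (Poly_Mapping.lookup m x)"
  shows "Poly_Mapping.single m c = Poly_Mapping.single m' c * var x ^ (Poly_Mapping.lookup m x)"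
    and "Poly_Mapping.keys m' \<subseteq> Poly_Mapping.keys m - {x}"
proof -
  have "m' + Poly_Mapping.single x (Poly_Mapping.lookup m x) = m"
    by (rule poly_mapping_eqI) (simp add: m'_def lookup_add lookup_minus lookup_single when_def)
  then show "Poly_Mapping.single m c = Poly_Mapping.single m' c * var x ^ (Poly_Mapping.lookup m x)"
    by (simp add: var_power mult_single)
  show "Poly_Mapping.keys m' \<subseteq> Poly_Mapping.keys m - {x}"
    by (auto simp: m'_def in_keys_iff lookup_minus lookup_single when_def split: if_splits)
qed

lemma sum_extend_zero:
  assumes "\<forall>k>N. a k = 0" "N \<le> M"
  shows "(\<Sum>k\<le>M. a k * (y::rpoly) ^ k) = (\<Sum>k\<le>N. a k * y ^ k)"
  by (rule sum.mono_neutral_right) (use assms in auto)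

lemma decomp_gen:
  assumes "finite F" "\<forall>m\<in>F. Poly_Mapping.keys m \<subseteq> insert x V"
  shows "\<exists>N a. (\<forall>k. a k \<in> Rv V) \<and> (\<forall>k>N. a k = 0) \<and>
    (\<Sum>m\<in>F. Poly_Mapping.single m (cf m)) = (\<Sum>k\<le>N. a k * var x ^ k)"
  using assms
proof (induct F rule: finite_induct)
  case empty
  show ?case by (rule exI[of _ 0], rule exI[of _ "\<lambda>_. 0"]) simp
next
  case (insert m F)
  from insert obtain N1 a1 where a1: "\<forall>k. a1 k \<in> Rv V" "\<forall>k>N1. a1 k = 0"
    "(\<Sum>m\<in>F. Poly_Mapping.single m (cf m)) = (\<Sum>k\<le>N1. a1 k * var x ^ k)" by auto
  define e where "e = Poly_Mapping.lookup m x"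
  define m' where "m' = m - Poly_Mapping.single x e"
  have split: "Poly_Mapping.single m (cf m) = Poly_Mapping.single m' (cf m) * var x ^ e"
    and km': "Poly_Mapping.keys m' \<subseteq> Poly_Mapping.keys m - {x}"
    using monomial_split[where m=m and x=x] unfolding e_def m'_def by auto
  have "Poly_Mapping.keys m' \<subseteq> V" using km' insert(4) by auto
  then have m'R: "Poly_Mapping.single m' (cf m) \<in> Rv V" by (rule Rv_single)
  define N where "N = N1 + e"
  define a where "a k = a1 k + (if k = e then Poly_Mapping.single m' (cf m) else 0)" for k
  have "(\<Sum>k\<le>N. a k * var x ^ k) = (\<Sum>k\<le>N. a1 k * var x ^ k)
      + (\<Sum>k\<le>N. (if k = e then Poly_Mapping.single m' (cf m) else 0) * var x ^ k)"
    by (simp add: a_def distrib_right sum.distrib)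
  also have "(\<Sum>k\<le>N. a1 k * var x ^ k) = (\<Sum>k\<le>N1. a1 k * var x ^ k)"
    by (rule sum_extend_zero) (use a1 N_def in auto)
  also have "(\<Sum>k\<le>N. (if k = e then Poly_Mapping.single m' (cf m) else 0) * var x ^ k)
      = Poly_Mapping.single m' (cf m) * var x ^ e"
    apply (subst sum.cong[OF refl, where h="\<lambda>k. if k = e then Poly_Mapping.single m' (cf m) * var x ^ k else 0"])
     apply simp
    apply (simp add: N_def)
    done
  finally have "(\<Sum>k\<le>N. a k * var x ^ k) = (\<Sum>m\<in>insert m F. Poly_Mapping.single m (cf m))"
    using insert(1,2) a1(3) split by (simp add: add.commute)
  moreover have "\<forall>k. a k \<in> Rv V" using a1(1) m'R by (auto simp: a_def intro: Rv_add)
  moreover have "\<forall>k>N. a k = 0" using a1(2) by (auto simp: a_def N_def)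
  ultimately show ?case by (intro exI[of _ N] exI[of _ a]) simp
qed

lemma decomp:
  assumes "f \<in> Rv (insert x V)"
  shows "\<exists>N a. (\<forall>k. a k \<in> Rv V) \<and> (\<forall>k>N. a k = 0) \<and> f = (\<Sum>k\<le>N. a k * var x ^ k)"
proof -
  have "\<forall>m\<in>Poly_Mapping.keys f. Poly_Mapping.keys m \<subseteq> insert x V" using assms by (simp add: Rv_iff)
  from decomp_gen[OF finite_keys this, of "Poly_Mapping.lookup f"] obtain N a where
    "\<forall>k. a k \<in> Rv V" "\<forall>k>N. a k = 0"
    "(\<Sum>m\<in>Poly_Mapping.keys f. Poly_Mapping.single m (Poly_Mapping.lookup f m)) = (\<Sum>k\<le>N. a k * var x ^ k)"
    by blast
  moreover have "f = (\<Sum>m\<in>Poly_Mapping.keys f. Poly_Mapping.single m (Poly_Mapping.lookup f m))"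
    by (rule poly_as_sum)
  ultimately show ?thesis by (intro exI[of _ N] exI[of _ a]) simp
qed

lemma divide_step:
  assumes f: "f \<in> Rv (insert x V)" and c: "c \<in> Rv V" and h: "h \<in> Rv V"
  shows "\<exists>d Q f'. c ^ d * f = Q * (c * var x - h) + f' \<and> Q \<in> Rv (insert x V) \<and> f' \<in> Rv V"
proof -
  from decomp[OF f] obtain N a where a: "\<forall>k. a k \<in> Rv V" "f = (\<Sum>k\<le>N. a k * var x ^ k)" by auto
  define g where "g = c * var x - h"
  define S where "S k = (\<Sum>i<k. h ^ (k - Suc i) * (c * var x) ^ i)" for k
  have tm: "c ^ N * (a k * var x ^ k) = (a k * c ^ (N - k) * S k) * g + a k * c ^ (N - k) * h ^ k"
    if "k \<le> N" for k
  proof -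
    have "c ^ N = c ^ (N - k) * c ^ k" using that by (simp add: power_add[symmetric])
    then have "c ^ N * (a k * var x ^ k) = a k * c ^ (N - k) * (c * var x) ^ k"
      by (simp add: power_mult_distrib mult_ac)
    also have "(c * var x) ^ k = g * S k + h ^ k"
      using power_diff_sumr2[of "c * var x" k h] unfolding g_def S_def by (simp add: algebra_simps)
    finally show ?thesis by (simp add: algebra_simps)
  qed
  have "c ^ N * f = (\<Sum>k\<le>N. a k * c ^ (N - k) * S k) * g + (\<Sum>k\<le>N. a k * c ^ (N - k) * h ^ k)"
    unfolding a(2) sum_distrib_left sum_distrib_right sum.distrib[symmetric]
    by (rule sum.cong) (simp_all add: tm)
  moreover have "(\<Sum>k\<le>N. a k * c ^ (N - k) * S k) \<in> Rv (insert x V)"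
    unfolding S_def
    by (intro Rv_sum Rv_mult Rv_power Rv_var Rv_mono[of V "insert x V"] a(1)[rule_format] c h) auto
  moreover have "(\<Sum>k\<le>N. a k * c ^ (N - k) * h ^ k) \<in> Rv V"
    by (intro Rv_sum Rv_mult Rv_power a(1)[rule_format] c h)
  ultimately show ?thesis unfolding g_def by blast
qed



inductive_set pf :: "((nat\<times>nat \<Rightarrow> real) \<Rightarrow> real) set" where
  pf_const: "(\<lambda>\<theta>. c) \<in> pf"
| pf_coord: "(\<lambda>\<theta>. \<theta> v) \<in> pf"
| pf_add: "f \<in> pf \<Longrightarrow> g \<in> pf \<Longrightarrow> (\<lambda>\<theta>. f \<theta> + g \<theta>) \<in> pf"
| pf_mult: "f \<in> pf \<Longrightarrow> g \<in> pf \<Longrightarrow> (\<lambda>\<theta>. f \<theta> * g \<theta>) \<in> pf"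

lemma pf_sum: "(\<And>a. a \<in> A \<Longrightarrow> F a \<in> pf) \<Longrightarrow> (\<lambda>\<theta>. \<Sum>a\<in>A. F a \<theta>) \<in> pf"
proof (induct A rule: infinite_finite_induct)
  case (infinite A) then show ?case using pf_const[of 0] by simp
next
  case empty then show ?case using pf_const[of 0] by simp
next
  case (insert x F) then show ?case by (simp add: pf_add)
qed

lemma pf_prod: "(\<And>a. a \<in> A \<Longrightarrow> F a \<in> pf) \<Longrightarrow> (\<lambda>\<theta>. \<Prod>a\<in>A. F a \<theta>) \<in> pf"
proof (induct A rule: infinite_finite_induct)
  case (infinite A) then show ?case using pf_const[of 1] by simp
next
  case empty then show ?case using pf_const[of 1] by simp
next
  case (insert x F) then show ?case by (simp add: pf_mult)
qed

lemma pf_power: "f \<in> pf \<Longrightarrow> (\<lambda>\<theta>. f \<theta> ^ n) \<in> pf"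
proof (induct n)
  case 0 then show ?case using pf_const[of 1] by simp
next
  case (Suc n) then show ?case using pf_mult[OF Suc(2) Suc(1)[OF Suc(2)]] by simp
qed

lemma pf_line: "f \<in> pf \<Longrightarrow> \<exists>q. \<forall>t. f (\<lambda>v. a v + t * b v) = poly q t"
proof (induct rule: pf.induct)
  case (pf_const c) then show ?case by (intro exI[of _ "[:c:]"]) simp
next
  case (pf_coord v) then show ?case by (intro exI[of _ "[:a v, b v:]"]) simp
next
  case (pf_add f g)
  then obtain q1 q2 where "\<forall>t. f (\<lambda>v. a v + t * b v) = poly q1 t" "\<forall>t. g (\<lambda>v. a v + t * b v) = poly q2 t" by blast
  then show ?case by (intro exI[of _ "q1 + q2"]) simp
next
  case (pf_mult f g)
  then obtain q1 q2 where "\<forall>t. f (\<lambda>v. a v + t * b v) = poly q1 t" "\<forall>t. g (\<lambda>v. a v + t * b v) = poly q2 t" by blast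
  then show ?case by (intro exI[of _ "q1 * q2"]) simp
qed

lemma pf_domain:
  assumes f: "f \<in> pf" and g: "g \<in> pf" and fg: "\<forall>\<theta>. f \<theta> * g \<theta> = 0"
  shows "(\<forall>\<theta>. f \<theta> = 0) \<or> (\<forall>\<theta>. g \<theta> = 0)"
proof (rule ccontr)
  assume "\<not> ?thesis"
  then obtain a b where fa: "f a \<noteq> 0" and gb: "g b \<noteq> 0" by auto
  define d where "d v = b v - a v" for v
  obtain q1 where q1: "\<forall>t. f (\<lambda>v. a v + t * d v) = poly q1 t" using pf_line[OF f] by blast
  obtain q2 where q2: "\<forall>t. g (\<lambda>v. a v + t * d v) = poly q2 t" using pf_line[OF g] by blast
  have "poly q1 0 \<noteq> 0" using q1 fa by (metis (no_types, lifting) add.right_neutral ext mult_zero_left)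
  then have "q1 \<noteq> 0" by auto
  have "(\<lambda>v. a v + 1 * d v) = b" by (simp add: d_def)
  then have "poly q2 1 \<noteq> 0" using q2 gb by metis
  then have "q2 \<noteq> 0" by auto
  have "\<forall>t. poly (q1 * q2) t = 0" using q1 q2 fg by (metis poly_mult)
  then have "q1 * q2 = 0" using poly_all_0_iff_0 by blast
  with \<open>q1 \<noteq> 0\<close> \<open>q2 \<noteq> 0\<close> show False by simp
qed

definition pp :: "(nat\<times>nat) set \<Rightarrow> nat \<Rightarrow> nat set" where
  "pp E b = {k. (k, b) \<in> E \<and> k < b}"

function S :: "(nat\<times>nat) set \<Rightarrow> (nat\<times>nat \<Rightarrow> real) \<Rightarrow> nat \<Rightarrow> nat \<Rightarrow> real" where
  "S E \<theta> a b = (if a < b then (\<Sum>k\<in>pp E b. \<theta> (k,b) * S E \<theta> (min a k) (max a k))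
     else if a = b then \<theta> (a,a) + (\<Sum>k\<in>pp E a. \<Sum>l\<in>pp E a. \<theta> (k,a) * \<theta> (l,a) * S E \<theta> (min k l) (max k l))
     else S E \<theta> b a)"
  by pat_completeness auto
termination by (relation "measure (\<lambda>(E,\<theta>,a,b). 2 * max a b + (if b < a then 1 else 0))") (auto simp: pp_def)

declare S.simps[simp del]

lemma S_sym: "S E \<theta> a b = S E \<theta> b a"
  by (cases a b rule: linorder_cases) (simp_all add: S.simps[of E \<theta> a b] S.simps[of E \<theta> b a])

lemma S_lt: "a < b \<Longrightarrow> S E \<theta> a b = (\<Sum>k\<in>pp E b. \<theta> (k,b) * S E \<theta> a k)"
  apply (subst S.simps)
  apply (simp)
  apply (rule sum.cong, simp)
  apply (metis S_sym max_def min_def)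
  done

lemma S_diag: "S E \<theta> a a = \<theta> (a,a) + (\<Sum>k\<in>pp E a. \<Sum>l\<in>pp E a. \<theta> (k,a) * \<theta> (l,a) * S E \<theta> k l)"
  apply (subst S.simps)
  apply (simp)
  apply (intro sum.cong refl)
  apply (metis S_sym max_def min_def)
  done

lemma pf_S: "(\<lambda>\<theta>. S E \<theta> a b) \<in> pf"
proof (induction "max a b" arbitrary: a b rule: less_induct)
  case less
  have lt: "(\<lambda>\<theta>. S E \<theta> x y) \<in> pf" if "x < y" "max x y = max a b" for x y
  proof -
    have "(\<lambda>\<theta>. S E \<theta> x y) = (\<lambda>\<theta>. \<Sum>k\<in>pp E y. \<theta> (k,y) * S E \<theta> x k)"
      using that by (simp add: S_lt)
    also have "\<dots> \<in> pf"
    proof (rule pf_sum)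
      fix k assume "k \<in> pp E y"
      then have "max x k < max a b" using that by (auto simp: pp_def)
      then show "(\<lambda>\<theta>. \<theta> (k,y) * S E \<theta> x k) \<in> pf" by (intro pf_mult pf_coord less)
    qed
    finally show ?thesis .
  qed
  show ?case
  proof (cases a b rule: linorder_cases)
    case less
    then show ?thesis using lt by simp
  next
    case greater
    then show ?thesis using lt[of b a] by (simp add: S_sym[of E _ a b] max.commute)
  next
    case equal
    have "(\<lambda>\<theta>. S E \<theta> a b) = (\<lambda>\<theta>. \<theta> (a,a) + (\<Sum>k\<in>pp E a. \<Sum>l\<in>pp E a. \<theta> (k,a) * \<theta> (l,a) * S E \<theta> k l))"
      using equal by (simp add: S_diag)
    also have "\<dots> \<in> pf"
    proof (intro pf_add pf_coord pf_sum)
      fix k l assume "k \<in> pp E a" "l \<in> pp E a"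
      then have "max k l < max a b" using equal by (auto simp: pp_def)
      then show "(\<lambda>\<theta>. \<theta> (k,a) * \<theta> (l,a) * S E \<theta> k l) \<in> pf" by (intro pf_mult pf_coord less.hyps)
    qed
    finally show ?thesis .
  qed
qed

lemma S_local:
  assumes "\<forall>v. snd v \<le> N \<longrightarrow> \<theta> v = \<theta>' v"
  shows "max a b \<le> N \<Longrightarrow> S E \<theta> a b = S E \<theta>' a b"
proof (induction "max a b" arbitrary: a b rule: less_induct)
  case less
  have lt: "S E \<theta> x y = S E \<theta>' x y" if "x < y" "max x y = max a b" for x y
  proof -
    have "S E \<theta> x y = (\<Sum>k\<in>pp E y. \<theta> (k,y) * S E \<theta> x k)" using that by (simp add: S_lt)
    also have "\<dots> = (\<Sum>k\<in>pp E y. \<theta>' (k,y) * S E \<theta>' x k)"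
    proof (rule sum.cong[OF refl])
      fix k assume "k \<in> pp E y"
      then have "max x k < max a b" using that by (auto simp: pp_def)
      moreover have "\<theta> (k,y) = \<theta>' (k,y)" using assms less.prems that by auto
      ultimately show "\<theta> (k,y) * S E \<theta> x k = \<theta>' (k,y) * S E \<theta>' x k" using less by simp
    qed
    also have "\<dots> = S E \<theta>' x y" using that by (simp add: S_lt)
    finally show ?thesis .
  qed
  show ?case
  proof (cases a b rule: linorder_cases)
    case less
    then show ?thesis using lt by simp
  next
    case greater
    then show ?thesis using lt[of b a] by (simp add: S_sym[of E _ a b] max.commute)
  next
    case equal
    have "S E \<theta> a b = \<theta> (a,a) + (\<Sum>k\<in>pp E a. \<Sum>l\<in>pp E a. \<theta> (k,a) * \<theta> (l,a) * S E \<theta> k l)"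
      using equal by (simp add: S_diag)
    also have "\<dots> = \<theta>' (a,a) + (\<Sum>k\<in>pp E a. \<Sum>l\<in>pp E a. \<theta>' (k,a) * \<theta>' (l,a) * S E \<theta>' k l)"
    proof (intro arg_cong2[where f="(+)"] sum.cong refl)
      show "\<theta> (a,a) = \<theta>' (a,a)" using assms less.prems equal by auto
      fix k l assume "k \<in> pp E a" "l \<in> pp E a"
      then have "max k l < max a b" using equal by (auto simp: pp_def)
      moreover have "\<theta> (k,a) = \<theta>' (k,a)" "\<theta> (l,a) = \<theta>' (l,a)" using assms less.prems equal by auto
      ultimately show "\<theta> (k,a) * \<theta> (l,a) * S E \<theta> k l = \<theta>' (k,a) * \<theta>' (l,a) * S E \<theta>' k l"
        using less by simp
    qed
    also have "\<dots> = S E \<theta>' a b" using equal by (simp add: S_diag)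
    finally show ?thesis .
  qed
qed

definition Sp :: "(nat\<times>nat) set \<Rightarrow> (nat\<times>nat \<Rightarrow> real) \<Rightarrow> nat\<times>nat \<Rightarrow> real" where
  "Sp E \<theta> v = S E \<theta> (fst v) (snd v)"

lemma pf_ev: assumes "\<And>v. (\<lambda>\<theta>. X \<theta> v) \<in> pf" shows "(\<lambda>\<theta>. ev (X \<theta>) f) \<in> pf"
  unfolding ev_def mon_def
proof (rule pf_sum)
  fix m
  have "(\<lambda>\<theta>. \<Prod>v\<in>Poly_Mapping.keys m. X \<theta> v ^ Poly_Mapping.lookup m v) \<in> pf"
    by (rule pf_prod) (rule pf_power[OF assms])
  then show "(\<lambda>\<theta>. Poly_Mapping.lookup f m * (\<Prod>v\<in>Poly_Mapping.keys m. X \<theta> v ^ Poly_Mapping.lookup m v)) \<in> pf"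
    using pf_mult[OF pf_const] by blast
qed

lemma pf_ev_S: "(\<lambda>\<theta>. ev (Sp E \<theta>) f) \<in> pf"
  by (rule pf_ev) (simp add: Sp_def pf_S)

lemma ev_local: assumes "f \<in> Rv V" "\<forall>v\<in>V. x v = y v" shows "ev x f = ev y f"
  unfolding ev_def
proof (rule sum.cong[OF refl])
  fix m assume "m \<in> Poly_Mapping.keys f"
  then have "Poly_Mapping.keys m \<subseteq> V" using assms(1) by (auto simp: Rv_iff)
  show "Poly_Mapping.lookup f m * mon x m = Poly_Mapping.lookup f m * mon y m"
  proof -
    have "mon x m = mon y m" unfolding mon_def
      by (rule prod.cong[OF refl]) (use assms(2) \<open>Poly_Mapping.keys m \<subseteq> V\<close> in auto)
    then show ?thesis by simp
  qed
qed



lemma sigma_var: "sigma a b = var (min a b, max a b)"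
  by (simp add: sigma_def var_def)

lemma ev_sigma_S: "ev (Sp E \<theta>) (sigma a b) = S E \<theta> a b"
  by (simp add: sigma_var Sp_def min_def max_def S_sym)

lemma ev_subdet: "ev x (subdet rs cs) = det (mat (length rs) (length cs) (\<lambda>(r,c). ev x (sigma (rs!r) (cs!c))))"
proof -
  have "ev x (subdet rs cs) = det (map_mat (ev x) (mat (length rs) (length cs) (\<lambda>(r, c). sigma (rs ! r) (cs ! c))))"
    unfolding subdet_def by (rule ev_hom.hom_det[symmetric])
  also have "map_mat (ev x) (mat (length rs) (length cs) (\<lambda>(r, c). sigma (rs ! r) (cs ! c)))
     = mat (length rs) (length cs) (\<lambda>(r,c). ev x (sigma (rs!r) (cs!c)))"
    by (rule eq_matI) auto
  finally show ?thesis .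
qed

lemma sum_list_nth:
  assumes "distinct L"
  shows "(\<Sum>k\<in>set L. g k) = (\<Sum>c<length L. g (L!c))"
  using sum.reindex_bij_betw[OF bij_betw_nth[OF assms refl refl], of g] by simp

lemma det_vanish:
  assumes L: "distinct L" "set L = pp E j" and i: "i < j"
  shows "det (mat (Suc (length L)) (Suc (length L)) (\<lambda>(r,c). S E \<theta> ((i#L)!r) ((j#L)!c))) = 0"
proof -
  define n where "n = Suc (length L)"
  define N where "N = mat n n (\<lambda>(r,c). S E \<theta> ((i#L)!r) ((j#L)!c))"
  define v where "v = vec n (\<lambda>c. if c = 0 then 1 else - \<theta> (L!(c-1), j))"
  have NC: "N \<in> carrier_mat n n" by (simp add: N_def)
  have Lj: "\<forall>k\<in>set L. k < j" using L by (auto simp: pp_def)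
  have "N *\<^sub>v v = 0\<^sub>v n"
  proof (rule eq_vecI)
    fix r assume "r < dim_vec (0\<^sub>v n :: real vec)"
    then have r: "r < n" by simp
    define a where "a = (i#L)!r"
    have aj: "a < j" using r Lj i by (cases r) (auto simp: a_def n_def)
    have "(N *\<^sub>v v) $ r = (\<Sum>c<n. N $$ (r,c) * v $ c)"
      using r NC by (simp add: scalar_prod_def N_def v_def atLeast0LessThan)
    also have "\<dots> = N $$ (r,0) * v $ 0 + (\<Sum>c<length L. N $$ (r, Suc c) * v $ Suc c)"
      unfolding n_def by (rule sum.lessThan_Suc_shift)
    also have "\<dots> = S E \<theta> a j - (\<Sum>c<length L. \<theta> (L!c, j) * S E \<theta> a (L!c))"
      using r by (simp add: N_def v_def n_def a_def sum_negf mult_ac)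
    also have "S E \<theta> a j = (\<Sum>k\<in>set L. \<theta> (k, j) * S E \<theta> a k)"
      using aj L by (simp add: S_lt)
    also have "\<dots> = (\<Sum>c<length L. \<theta> (L!c, j) * S E \<theta> a (L!c))"
      by (rule sum_list_nth[OF L(1)])
    finally show "(N *\<^sub>v v) $ r = 0\<^sub>v n $ r" using r by simp
  qed (simp add: N_def)
  moreover have "v \<in> carrier_vec n" by (simp add: v_def)
  moreover have "v \<noteq> 0\<^sub>v n"
  proof
    assume "v = 0\<^sub>v n"
    then have "v $ 0 = 0" by (simp add: n_def)
    then show False by (simp add: v_def n_def)
  qed
  ultimately have "det N = 0" using det_0_iff_vec_prod_zero_field[OF NC] by blast
  then show ?thesis by (simp add: N_def n_def)
qed

definition theta0 :: "nat\<times>nat \<Rightarrow> real" where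
  "theta0 v = (if fst v = snd v then 1 else 0)"

lemma S_theta0: "S E theta0 a b = (if a = b then 1 else 0)"
proof (cases a b rule: linorder_cases)
  case less
  then show ?thesis by (simp add: S_lt theta0_def pp_def)
next
  case equal
  then show ?thesis by (simp add: S_diag theta0_def pp_def)
next
  case greater
  then show ?thesis by (simp add: S_sym[of E _ a b] S_lt theta0_def pp_def)
qed

lemma ev_princ_theta0:
  assumes "finite K"
  shows "ev (Sp E theta0) (princ_det K) = 1"
proof -
  define L where "L = sorted_list_of_set K"
  have d: "distinct L" by (simp add: L_def)
  have "ev (Sp E theta0) (princ_det K) = det (mat (length L) (length L) (\<lambda>(r,c). S E theta0 (L!r) (L!c)))"
    by (simp add: princ_det_def ev_subdet ev_sigma_S L_def)
  also have "mat (length L) (length L) (\<lambda>(r,c). S E theta0 (L!r) (L!c)) = 1\<^sub>m (length L)"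
    by (rule eq_matI) (auto simp: S_theta0 nth_eq_iff_index_eq[OF d])
  finally show ?thesis by simp
qed



lemma S_local_lt:
  assumes "\<forall>v. snd v < j \<longrightarrow> \<theta> v = \<theta>' v" "a < j" "b < j"
  shows "S E \<theta> a b = S E \<theta>' a b"
  by (rule S_local[of "j - 1"]) (use assms in auto)

lemma surj_col:
  assumes L: "distinct L" "set L = pp E j"
    and D: "det (mat (length L) (length L) (\<lambda>(r,c). S E \<theta> (L!r) (L!c))) \<noteq> 0"
  shows "\<exists>\<theta>'. (\<forall>v. snd v < j \<longrightarrow> \<theta>' v = \<theta> v) \<and> (\<forall>k\<in>set L. S E \<theta>' k j = y (k,j)) \<and> S E \<theta>' j j = y (j,j)"
proof -
  define n where "n = length L"
  define A where "A = mat n n (\<lambda>(r,c). S E \<theta> (L!r) (L!c))"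
  have AC: "A \<in> carrier_mat n n" by (simp add: A_def)
  have Lj: "\<forall>k\<in>set L. k < j" using L by (auto simp: pp_def)
  from det_non_zero_imp_unit[OF AC, of "()"] D
  have "A \<in> Units (ring_mat TYPE(real) n ())" by (simp add: A_def n_def)
  then obtain B where BC: "B \<in> carrier_mat n n" and AB: "A * B = 1\<^sub>m n"
    by (auto simp: Units_def ring_mat_def)
  define b where "b = vec n (\<lambda>r. y (L!r, j))"
  define lam where "lam = B *\<^sub>v b"
  have Alam: "A *\<^sub>v lam = b"
  proof -
    have "A *\<^sub>v lam = (A * B) *\<^sub>v b" unfolding lam_def
      by (rule assoc_mult_mat_vec[symmetric, OF AC BC]) (simp add: b_def)
    then show ?thesis using AB by (simp add: b_def)
  qed
  have dl: "dim_vec lam = n" using BC by (simp add: lam_def)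
  define idx where "idx k = (THE c. c < n \<and> L!c = k)" for k
  have idx: "idx (L!c) = c" if "c < n" for c
    unfolding idx_def
    by (rule the_equality) (use that L(1) in \<open>auto simp: n_def nth_eq_iff_index_eq\<close>)
  have idx2: "idx k < n \<and> L ! idx k = k" if "k \<in> set L" for k
    using that idx by (metis in_set_conv_nth n_def)
  define \<theta>1 where "\<theta>1 v = (if snd v = j \<and> fst v \<in> set L then lam $ idx (fst v) else \<theta> v)" for v
  define \<omega> where "\<omega> = y (j,j) - (\<Sum>k\<in>pp E j. \<Sum>l\<in>pp E j. \<theta>1 (k,j) * \<theta>1 (l,j) * S E \<theta>1 k l)"
  define \<theta>' where "\<theta>' = \<theta>1((j,j) := \<omega>)"
  have agree: "\<forall>v. snd v < j \<longrightarrow> \<theta>' v = \<theta> v" by (auto simp: \<theta>'_def \<theta>1_def)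
  have agree1: "\<forall>v. snd v < j \<longrightarrow> \<theta>1 v = \<theta> v" by (auto simp: \<theta>1_def)
  have Sloc: "S E \<theta>' a c = S E \<theta> a c" if "a < j" "c < j" for a c
    using S_local_lt[OF _ that, of \<theta>' \<theta>] agree by simp
  have Sloc1: "S E \<theta>1 a c = S E \<theta> a c" if "a < j" "c < j" for a c
    using S_local_lt[OF _ that, of \<theta>1 \<theta>] agree1 by simp
  have col: "S E \<theta>' k j = y (k,j)" if k: "k \<in> set L" for k
  proof -
    have kj: "k < j" using k Lj by auto
    have "S E \<theta>' k j = (\<Sum>l\<in>set L. \<theta>' (l,j) * S E \<theta>' k l)" using kj L by (simp add: S_lt)
    also have "\<dots> = (\<Sum>l\<in>set L. lam $ idx l * S E \<theta> k l)"
    proof (rule sum.cong[OF refl])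
      fix l assume l: "l \<in> set L"
      then have lj: "l < j" using Lj by auto
      then have "\<theta>' (l,j) = lam $ idx l" using l by (simp add: \<theta>'_def \<theta>1_def)
      moreover have "S E \<theta>' k l = S E \<theta> k l" by (rule Sloc[OF kj lj])
      ultimately show "\<theta>' (l,j) * S E \<theta>' k l = lam $ idx l * S E \<theta> k l" by simp
    qed
    also have "\<dots> = (\<Sum>c<n. lam $ c * S E \<theta> k (L!c))"
      using sum_list_nth[OF L(1), of "\<lambda>l. lam $ idx l * S E \<theta> k l"] by (simp add: n_def idx)
    also have "\<dots> = (A *\<^sub>v lam) $ idx k"
      using idx2[OF k] dl by (simp add: A_def scalar_prod_def atLeast0LessThan mult.commute)
    also have "\<dots> = y (k,j)" using idx2[OF k] by (simp add: Alam b_def)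
    finally show ?thesis .
  qed
  have diag: "S E \<theta>' j j = y (j,j)"
  proof -
    have "S E \<theta>' j j = \<theta>' (j,j) + (\<Sum>k\<in>pp E j. \<Sum>l\<in>pp E j. \<theta>' (k,j) * \<theta>' (l,j) * S E \<theta>' k l)"
      by (rule S_diag)
    also have "(\<Sum>k\<in>pp E j. \<Sum>l\<in>pp E j. \<theta>' (k,j) * \<theta>' (l,j) * S E \<theta>' k l)
        = (\<Sum>k\<in>pp E j. \<Sum>l\<in>pp E j. \<theta>1 (k,j) * \<theta>1 (l,j) * S E \<theta>1 k l)"
    proof (intro sum.cong refl)
      fix k l assume "k \<in> pp E j" "l \<in> pp E j"
      then have kl: "k < j" "l < j" by (auto simp: pp_def)
      then have "\<theta>' (k,j) = \<theta>1 (k,j)" "\<theta>' (l,j) = \<theta>1 (l,j)" by (auto simp: \<theta>'_def)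
      moreover have "S E \<theta>' k l = S E \<theta>1 k l" using Sloc[OF kl] Sloc1[OF kl] by simp
      ultimately show "\<theta>' (k,j) * \<theta>' (l,j) * S E \<theta>' k l = \<theta>1 (k,j) * \<theta>1 (l,j) * S E \<theta>1 k l" by simp
    qed
    moreover have "\<theta>' (j,j) = \<omega>" by (simp add: \<theta>'_def)
    ultimately show ?thesis by (simp add: \<omega>_def)
  qed
  show ?thesis using agree col diag by blast
qed



definition ovr :: "(nat\<times>nat \<Rightarrow> real) \<Rightarrow> (nat\<times>nat) set \<Rightarrow> (nat\<times>nat \<Rightarrow> real) \<Rightarrow> nat\<times>nat \<Rightarrow> real" where
  "ovr x B y = (\<lambda>v. if v \<in> B then y v else x v)"

lemma Rv_empty_zero:
  assumes "f \<in> Rv {}" "ev x f = 0" shows "f = 0"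
proof (rule ccontr)
  assume "f \<noteq> 0"
  have k: "Poly_Mapping.keys f \<subseteq> {0}" using assms(1) by (auto simp: Rv_iff)
  with \<open>f \<noteq> 0\<close> have "Poly_Mapping.keys f = {0}" by (metis keys_eq_empty subset_singletonD)
  then have "ev x f = Poly_Mapping.lookup f 0" by (simp add: ev_def)
  moreover have "Poly_Mapping.lookup f 0 \<noteq> 0" using \<open>Poly_Mapping.keys f = {0}\<close> by (simp add: in_keys_iff[symmetric])
  ultimately show False using assms(2) by simp
qed

locale dag =
  fixes p :: nat and E :: "(nat\<times>nat) set"
  assumes dag: "nat_ordered_dag p E"
begin

lemma E_sub: "(k,j) \<in> E \<Longrightarrow> 1 \<le> k \<and> k < j \<and> j \<le> p"
  using dag by (auto simp: nat_ordered_dag_def)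

lemma pa_pp: "pa E j = pp E j"
  using E_sub by (auto simp: pa_def pp_def)

lemma fin_pa: "finite (pa E j)"
  unfolding pa_pp pp_def by (rule finite_subset[of _ "{..<j}"]) auto

definition Lj :: "nat \<Rightarrow> nat list" where "Lj j = sorted_list_of_set (pa E j)"

lemma Lj: "distinct (Lj j)" "set (Lj j) = pp E j"
  using fin_pa by (auto simp: Lj_def pa_pp)

definition Dj :: "nat \<Rightarrow> (nat\<times>nat \<Rightarrow> real) \<Rightarrow> real" where
  "Dj j \<theta> = ev (Sp E \<theta>) (princ_det (pa E j))"

lemma Dj_det: "Dj j \<theta> = det (mat (length (Lj j)) (length (Lj j)) (\<lambda>(r,c). S E \<theta> (Lj j!r) (Lj j!c)))"
  by (simp add: Dj_def princ_det_def ev_subdet ev_sigma_S Lj_def)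

lemma Dj_pf: "(\<lambda>\<theta>. Dj j \<theta>) \<in> pf"
  unfolding Dj_def by (rule pf_ev_S)

lemma Dj_theta0: "Dj j theta0 = 1"
  unfolding Dj_def by (rule ev_princ_theta0[OF fin_pa])

definition Free :: "(nat\<times>nat) set" where
  "Free = {(a,b). 1 \<le> a \<and> a \<le> b \<and> b \<le> p \<and> (a = b \<or> (a,b) \<in> E)}"

definition Fj :: "nat \<Rightarrow> (nat\<times>nat) set" where "Fj j = {v\<in>Free. snd v < j}"
definition Bj :: "nat \<Rightarrow> (nat\<times>nat) set" where "Bj j = {v\<in>Free. snd v = j}"

lemma fin_Bj: "finite (Bj j)"
  by (rule finite_subset[of _ "{0..p} \<times> {0..p}"]) (auto simp: Bj_def Free_def)

lemma inner:
  assumes IH: "\<forall>g\<in>Rv (Fj j). (\<forall>\<theta>. ev (Sp E \<theta>) g = 0) \<longrightarrow> g = 0"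
    and B: "B \<subseteq> Bj j"
  shows "g \<in> Rv (Fj j \<union> B) \<Longrightarrow> (\<forall>\<theta> y. Dj j \<theta> \<noteq> 0 \<longrightarrow> ev (ovr (Sp E \<theta>) B y) g = 0) \<Longrightarrow> g = 0"
proof -
  have "finite B" using B fin_Bj finite_subset by blast
  then show "g \<in> Rv (Fj j \<union> B) \<Longrightarrow> (\<forall>\<theta> y. Dj j \<theta> \<noteq> 0 \<longrightarrow> ev (ovr (Sp E \<theta>) B y) g = 0) \<Longrightarrow> g = 0"
    using B
  proof (induction B arbitrary: g rule: finite_induct)
    case empty
    have "\<forall>\<theta>. ev (Sp E \<theta>) g * Dj j \<theta> = 0"
      using empty.prems(2) by (auto simp: ovr_def)
    moreover have "\<not> (\<forall>\<theta>. Dj j \<theta> = 0)" using Dj_theta0[of j] by (metis one_neq_zero)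
    ultimately have "\<forall>\<theta>. ev (Sp E \<theta>) g = 0" using pf_domain[OF pf_ev_S Dj_pf] by blast
    with IH empty.prems(1) show "g = 0" by simp
  next
    case (insert b B)
    have bB: "b \<in> Bj j" using insert.prems(3) by auto
    have bF: "b \<notin> Fj j \<union> B" using bB insert.hyps(2) by (auto simp: Fj_def Bj_def)
    have "g \<in> Rv (insert b (Fj j \<union> B))" using insert.prems(1) by simp
    from decomp[OF this] obtain N a where a: "\<forall>k. a k \<in> Rv (Fj j \<union> B)" "\<forall>k>N. a k = 0"
      "g = (\<Sum>k\<le>N. a k * var b ^ k)" by blast
    have "a k = 0" for k
    proof (rule insert.IH)
      show "a k \<in> Rv (Fj j \<union> B)" using a(1) by simp
      show "B \<subseteq> Bj j" using insert.prems(3) by simp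
      show "\<forall>\<theta> y. Dj j \<theta> \<noteq> 0 \<longrightarrow> ev (ovr (Sp E \<theta>) B y) (a k) = 0"
      proof (intro allI impI)
        fix \<theta> y assume D: "Dj j \<theta> \<noteq> 0"
        define c where "c k = ev (ovr (Sp E \<theta>) B y) (a k)" for k
        have "\<forall>t. (\<Sum>k\<le>N. c k * t ^ k) = 0"
        proof
          fix t :: real
          have loc: "ev (ovr (Sp E \<theta>) (insert b B) (y(b:=t))) (a k) = c k" for k
            unfolding c_def
            by (rule ev_local[OF a(1)[rule_format]]) (use bF in \<open>auto simp: ovr_def\<close>)
          have vb: "ovr (Sp E \<theta>) (insert b B) (y(b:=t)) b = t" by (simp add: ovr_def)
          have "0 = ev (ovr (Sp E \<theta>) (insert b B) (y(b:=t))) g"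
            using insert.prems(2) D by simp
          also have "\<dots> = (\<Sum>k\<le>N. c k * t ^ k)"
            unfolding a(3) by (simp add: ev_sum ev_mult ev_hom.hom_power loc vb)
          finally show "(\<Sum>k\<le>N. c k * t ^ k) = 0" by simp
        qed
        then have "\<forall>k\<le>N. c k = 0" using polyfun_eq_0 by blast
        then show "ev (ovr (Sp E \<theta>) B y) (a k) = 0"
          using a(2) by (cases "k \<le> N") (auto simp: c_def)
      qed
    qed
    then show "g = 0" using a(3) by simp
  qed
qed

lemma base_ind: "\<forall>g\<in>Rv (Fj j). (\<forall>\<theta>. ev (Sp E \<theta>) g = 0) \<longrightarrow> g = 0"
proof (induction j)
  case 0
  have "Fj 0 = {}" by (simp add: Fj_def)
  then show ?case using Rv_empty_zero by auto
next
  case (Suc j)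
  show ?case
  proof (intro ballI impI)
    fix g assume g: "g \<in> Rv (Fj (Suc j))" and z: "\<forall>\<theta>. ev (Sp E \<theta>) g = 0"
    have FS: "Fj (Suc j) = Fj j \<union> Bj j" by (auto simp: Fj_def Bj_def)
    show "g = 0"
    proof (rule inner[OF Suc.IH subset_refl])
      show "g \<in> Rv (Fj j \<union> Bj j)" using g FS by simp
      show "\<forall>\<theta> y. Dj j \<theta> \<noteq> 0 \<longrightarrow> ev (ovr (Sp E \<theta>) (Bj j) y) g = 0"
      proof (intro allI impI)
        fix \<theta> y assume D: "Dj j \<theta> \<noteq> 0"
        obtain \<theta>' where th: "\<forall>v. snd v < j \<longrightarrow> \<theta>' v = \<theta> v" "\<forall>k\<in>set (Lj j). S E \<theta>' k j = y (k,j)"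
          "S E \<theta>' j j = y (j,j)"
          using surj_col[OF Lj[of j], where \<theta>=\<theta> and y=y] D by (auto simp: Dj_det)
        have "ev (ovr (Sp E \<theta>) (Bj j) y) g = ev (Sp E \<theta>') g"
        proof (rule ev_local[OF g], intro ballI)
          fix v assume v: "v \<in> Fj (Suc j)"
          obtain a b where ab: "v = (a,b)" by fastforce
          show "ovr (Sp E \<theta>) (Bj j) y v = Sp E \<theta>' v"
          proof (cases "b = j")
            case True
            then have vB: "v \<in> Bj j" using v ab by (auto simp: Fj_def Bj_def)
            show ?thesis
            proof (cases "a = j")
              case True
              then show ?thesis using vB ab th(3) \<open>b = j\<close> by (simp add: ovr_def Sp_def)
            next
              case False
              then have "(a,j) \<in> E" using v ab \<open>b = j\<close> by (auto simp: Fj_def Free_def)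
              then have "a \<in> set (Lj j)" using Lj(2) E_sub by (auto simp: pp_def)
              then show ?thesis using vB ab th(2) \<open>b = j\<close> by (simp add: ovr_def Sp_def)
            qed
          next
            case False
            then have "b < j" "a \<le> b" "v \<notin> Bj j" using v ab by (auto simp: Fj_def Bj_def Free_def)
            then show ?thesis using ab S_local_lt[where j=j and \<theta>=\<theta> and \<theta>'=\<theta>' and a=a and b=b and E=E] th(1)
              by (simp add: ovr_def Sp_def)
          qed
        qed
        then show "ev (ovr (Sp E \<theta>) (Bj j) y) g = 0" using z by simp
      qed
    qed
  qed
qed

lemma base_case: "f \<in> Rv Free \<Longrightarrow> \<forall>\<theta>. ev (Sp E \<theta>) f = 0 \<Longrightarrow> f = 0"
proof -
  assume "f \<in> Rv Free" "\<forall>\<theta>. ev (Sp E \<theta>) f = 0"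
  moreover have "Fj (Suc p) = Free" by (auto simp: Fj_def Free_def)
  ultimately show "f = 0" using base_ind[of "Suc p"] by simp
qed

end


lemma laplace_corner:
  fixes M :: "'a::comm_ring_1 mat"
  assumes MC: "M \<in> carrier_mat (Suc m) (Suc m)"
  defines "M0 \<equiv> mat (Suc m) (Suc m) (\<lambda>(r,c). if r = 0 \<and> c = 0 then 0 else M $$ (r,c))"
  shows "det M = M $$ (0,0) * det (mat_delete M 0 0) + det M0"
proof -
  have M0C: "M0 \<in> carrier_mat (Suc m) (Suc m)" by (simp add: M0_def)
  have del: "mat_delete M0 r 0 = mat_delete M r 0" if "r < Suc m" for r
    by (rule eq_matI) (use MC that in \<open>auto simp: mat_delete_def M0_def\<close>)
  have "det M = (\<Sum>r<Suc m. M $$ (r,0) * cofactor M r 0)"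
    by (rule laplace_expansion_column[OF MC]) simp
  also have "\<dots> = M $$ (0,0) * cofactor M 0 0 + (\<Sum>r<m. M $$ (Suc r,0) * cofactor M (Suc r) 0)"
    by (rule sum.lessThan_Suc_shift)
  also have "(\<Sum>r<m. M $$ (Suc r,0) * cofactor M (Suc r) 0) = (\<Sum>r<m. M0 $$ (Suc r,0) * cofactor M0 (Suc r) 0)"
  proof (rule sum.cong[OF refl])
    fix r assume "r \<in> {..<m}"
    then have r: "Suc r < Suc m" by simp
    have "M0 $$ (Suc r, 0) = M $$ (Suc r, 0)" using r unfolding M0_def by simp
    then show "M $$ (Suc r,0) * cofactor M (Suc r) 0 = M0 $$ (Suc r,0) * cofactor M0 (Suc r) 0"
      unfolding cofactor_def del[OF r] by simp
  qed
  also have "\<dots> = det M0"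
  proof -
    have "det M0 = (\<Sum>r<Suc m. M0 $$ (r,0) * cofactor M0 r 0)"
      by (rule laplace_expansion_column[OF M0C]) simp
    also have "\<dots> = M0 $$ (0,0) * cofactor M0 0 0 + (\<Sum>r<m. M0 $$ (Suc r,0) * cofactor M0 (Suc r) 0)"
      by (rule sum.lessThan_Suc_shift)
    finally show ?thesis by (simp add: M0_def)
  qed
  finally show ?thesis by (simp add: cofactor_def)
qed

context dag
begin

definition U :: "(nat\<times>nat) set" where "U = {(i,j). 1 \<le> i \<and> i \<le> j \<and> j \<le> p}"
definition Dep :: "(nat\<times>nat) set" where "Dep = {(i,j). 1 \<le> i \<and> i < j \<and> j \<le> p \<and> (i,j) \<notin> E}"
definition rk :: "nat\<times>nat \<Rightarrow> nat" where "rk v = snd v * (p+1) + fst v + 1"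
definition W :: "nat \<Rightarrow> (nat\<times>nat) set" where "W n = Free \<union> {d\<in>Dep. rk d < n}"

lemma RSigma_Rv: "RSigma p = Rv U"
  by (simp add: RSigma_def Rv_def U_def)

lemma W_U: "W n \<subseteq> U"
  by (auto simp: W_def U_def Free_def Dep_def)

lemma Dep_U: "Dep \<subseteq> U" by (auto simp: U_def Dep_def)

lemma U_eq: "U = Free \<union> Dep" by (auto simp: U_def Free_def Dep_def)

lemma rk_inj: "a \<le> p \<Longrightarrow> a' \<le> p \<Longrightarrow> rk (a,b) = rk (a',b') \<Longrightarrow> a = a' \<and> b = b'"
proof -
  assume a: "a \<le> p" "a' \<le> p" "rk (a,b) = rk (a',b')"
  then have e: "b * (p+1) + a = b' * (p+1) + a'" by (simp add: rk_def)
  have "(a + b * (p+1)) div (p+1) = b + a div (p+1)" by (rule div_mult_self1) simp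
  then have 1: "(b * (p+1) + a) div (p+1) = b" using a(1) by (simp add: add.commute)
  have "(a' + b' * (p+1)) div (p+1) = b' + a' div (p+1)" by (rule div_mult_self1) simp
  then have 2: "(b' * (p+1) + a') div (p+1) = b'" using a(2) by (simp add: add.commute)
  have "b = b'" using e 1 2 by simp
  with e show ?thesis by simp
qed

lemma pair_in_W:
  assumes "1 \<le> a" "1 \<le> b" "a < j" "b < j" "j * (p+1) < n" "j \<le> p"
  shows "(min a b, max a b) \<in> W n"
proof (cases "min a b = max a b \<or> (min a b, max a b) \<in> E")
  case True
  then show ?thesis using assms by (auto simp: W_def Free_def)
next
  case False
  then have "(min a b, max a b) \<in> Dep" using assms by (auto simp: Dep_def)
  moreover have "rk (min a b, max a b) < n"
  proof -
    have "max a b + 1 \<le> j" "min a b \<le> p" using assms by auto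
    then have "(max a b + 1) * (p+1) \<le> j * (p+1)" by (simp only: mult_le_mono1)
    then have "max a b * (p+1) + min a b + 1 \<le> j * (p+1)" using \<open>min a b \<le> p\<close> by (simp add: algebra_simps)
    then show ?thesis using assms(5) by (simp add: rk_def)
  qed
  ultimately show ?thesis by (simp add: W_def)
qed

lemma sigma_Rv: "(min a b, max a b) \<in> V \<Longrightarrow> sigma a b \<in> Rv V"
  by (simp add: sigma_var Rv_var)

lemma Lj_props: "k \<in> set (Lj j) \<Longrightarrow> 1 \<le> k \<and> k < j \<and> j \<le> p"
  using Lj(2) E_sub by (auto simp: pp_def)

lemma princ_W:
  assumes "j * (p+1) < n" "j \<le> p"
  shows "princ_det (pa E j) \<in> Rv (W n)"
  unfolding princ_det_def subdet_def Lj_def[symmetric]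
proof (rule Rv_det[of _ "length (Lj j)"])
  fix r c assume "r < length (Lj j)" "c < length (Lj j)"
  then have "Lj j ! r \<in> set (Lj j)" "Lj j ! c \<in> set (Lj j)" by auto
  then have "1 \<le> Lj j ! r \<and> Lj j ! r < j" "1 \<le> Lj j ! c \<and> Lj j ! c < j"
    using Lj_props by blast+
  then show "mat (length (Lj j)) (length (Lj j)) (\<lambda>(r, c). sigma (Lj j ! r) (Lj j ! c)) $$ (r, c) \<in> Rv (W n)"
    using \<open>r < _\<close> \<open>c < _\<close> assms by (auto intro!: sigma_Rv pair_in_W)
qed simp

lemma cond_decomp:
  assumes x: "(i,j) \<in> Dep"
  shows "\<exists>h \<in> Rv (W (rk (i,j))). cond_det i j (pa E j) = princ_det (pa E j) * var (i,j) - h"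
proof -
  define L where "L = Lj j"
  define m where "m = length L"
  define M where "M = mat (Suc m) (Suc m) (\<lambda>(r, c). sigma ((i#L) ! r) ((j#L) ! c))"
  define M0 where "M0 = mat (Suc m) (Suc m) (\<lambda>(r,c). if r = 0 \<and> c = 0 then 0 else M $$ (r,c))"
  have ij: "1 \<le> i" "i < j" "j \<le> p" using x by (auto simp: Dep_def)
  have n: "j * (p+1) < rk (i,j)" by (simp add: rk_def)
  have MC: "M \<in> carrier_mat (Suc m) (Suc m)" by (simp add: M_def)
  have cd: "cond_det i j (pa E j) = det M"
    by (simp add: cond_det_def subdet_def M_def L_def m_def Lj_def)
  have del: "mat_delete M 0 0 = mat m m (\<lambda>(r, c). sigma (L ! r) (L ! c))"
    by (rule eq_matI) (auto simp: mat_delete_def M_def)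
  have pd: "princ_det (pa E j) = det (mat m m (\<lambda>(r, c). sigma (L ! r) (L ! c)))"
    by (simp add: princ_det_def subdet_def L_def m_def Lj_def)
  have corner: "M $$ (0,0) = var (i,j)" using ij by (simp add: M_def sigma_var)
  have "det M = M $$ (0,0) * det (mat_delete M 0 0) + det M0"
    unfolding M0_def by (rule laplace_corner[OF MC])
  then have eq: "cond_det i j (pa E j) = princ_det (pa E j) * var (i,j) - (- det M0)"
    using cd del pd corner by (simp add: mult.commute)
  have "det M0 \<in> Rv (W (rk (i,j)))"
  proof (rule Rv_det[of _ "Suc m"])
    fix r c assume rc: "r < Suc m" "c < Suc m"
    show "M0 $$ (r,c) \<in> Rv (W (rk (i,j)))"
    proof (cases "r = 0")
      case r0: True
      show ?thesis
      proof (cases "c = 0")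
        case True then show ?thesis using r0 by (simp add: M0_def)
      next
        case False
        then obtain c' where c': "c = Suc c'" "c' < m" using rc by (cases c) auto
        then have "L ! c' \<in> set L" by (simp add: m_def)
        then have "1 \<le> L ! c' \<and> L ! c' < j" using Lj_props L_def by blast
        then show ?thesis using r0 c' rc ij n
          by (auto simp: M0_def M_def intro!: sigma_Rv pair_in_W)
      qed
    next
      case False
      then obtain r' where r': "r = Suc r'" "r' < m" using rc by (cases r) auto
      then have rL: "L ! r' \<in> set L" by (simp add: m_def)
      then have rp: "1 \<le> L ! r' \<and> L ! r' < j" using Lj_props L_def by blast
      show ?thesis
      proof (cases "c = 0")
        case True
        have "(L ! r', j) \<in> E" using rL Lj(2) L_def by (auto simp: pp_def)
        then have "(min (L ! r') j, max (L ! r') j) \<in> W (rk (i,j))"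
          using rp ij by (auto simp: W_def Free_def min_def max_def)
        then show ?thesis using True r' rc by (auto simp: M0_def M_def intro!: sigma_Rv)
      next
        case False
        then obtain c' where c': "c = Suc c'" "c' < m" using rc by (cases c) auto
        then have "L ! c' \<in> set L" by (simp add: m_def)
        then have "1 \<le> L ! c' \<and> L ! c' < j" using Lj_props L_def by blast
        then show ?thesis using r' c' rc ij n rp
          by (auto simp: M0_def M_def intro!: sigma_Rv pair_in_W)
      qed
    qed
  qed (simp add: M0_def)
  then have "- det M0 \<in> Rv (W (rk (i,j)))" by (rule Rv_uminus)
  with eq show ?thesis by blast
qed

end


context dag
begin

definition gens :: "rpoly set" where
  "gens = {cond_det i j (pa E j) | i j. 1 \<le> i \<and> i < j \<and> j \<le> p \<and> (i, j) \<notin> E}"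

definition PP :: "rpoly set" where
  "PP = {f \<in> RSigma p. \<forall>\<theta>. ev (Sp E \<theta>) f = 0}"

lemma IG_def': "I_G p E = ideal_gen (RSigma p) gens"
  by (simp add: I_G_def gens_def)

lemma PP_ideal: "is_ideal (RSigma p) PP"
  unfolding is_ideal_def PP_def RSigma_Rv
  by (auto intro: Rv_add Rv_mult simp: ev_add ev_mult)

lemma cond_R: "(i,j) \<in> Dep \<Longrightarrow> cond_det i j (pa E j) \<in> RSigma p"
proof -
  assume x: "(i,j) \<in> Dep"
  then obtain h where h: "h \<in> Rv (W (rk (i,j)))" "cond_det i j (pa E j) = princ_det (pa E j) * var (i,j) - h"
    using cond_decomp by blast
  have jp: "j \<le> p" using x by (auto simp: Dep_def)
  have "princ_det (pa E j) \<in> Rv (W (rk (i,j)))" by (rule princ_W) (use jp in \<open>auto simp: rk_def\<close>)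
  then have "princ_det (pa E j) \<in> Rv U" using W_U Rv_mono by blast
  moreover have "h \<in> Rv U" using h(1) W_U Rv_mono by blast
  moreover have "var (i,j) \<in> Rv U" using x Dep_U by (auto intro: Rv_var)
  ultimately show ?thesis unfolding RSigma_Rv h(2) by (intro Rv_diff Rv_mult)
qed

lemma ev_cond: "(i,j) \<in> Dep \<Longrightarrow> ev (Sp E \<theta>) (cond_det i j (pa E j)) = 0"
proof -
  assume x: "(i,j) \<in> Dep"
  then have "i < j" by (auto simp: Dep_def)
  have "ev (Sp E \<theta>) (cond_det i j (pa E j)) =
     det (mat (Suc (length (Lj j))) (Suc (length (Lj j))) (\<lambda>(r,c). S E \<theta> ((i#Lj j)!r) ((j#Lj j)!c)))"
    by (simp add: cond_det_def ev_subdet ev_sigma_S Lj_def)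
  also have "\<dots> = 0" by (rule det_vanish[OF Lj \<open>i < j\<close>])
  finally show ?thesis .
qed

lemma gens_PP: "gens \<subseteq> PP"
  unfolding gens_def PP_def using cond_R ev_cond by (auto simp: Dep_def)

lemma IG_PP: "I_G p E \<subseteq> PP"
  unfolding IG_def' ideal_gen_def using PP_ideal gens_PP by blast

lemma mem_IG: "(\<And>I. is_ideal (RSigma p) I \<Longrightarrow> gens \<subseteq> I \<Longrightarrow> x \<in> I) \<Longrightarrow> x \<in> I_G p E"
  unfolding IG_def' ideal_gen_def by blast

lemma IG_sub: "x \<in> I_G p E \<Longrightarrow> is_ideal (RSigma p) I \<Longrightarrow> gens \<subseteq> I \<Longrightarrow> x \<in> I"
  unfolding IG_def' ideal_gen_def by blast

lemma princ_R: "i \<le> p \<Longrightarrow> princ_det (pa E i) \<in> RSigma p"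
proof -
  assume "i \<le> p"
  then have "princ_det (pa E i) \<in> Rv (W (i * (p+1) + 1))" by (intro princ_W) auto
  then show ?thesis unfolding RSigma_Rv using W_U Rv_mono by blast
qed

lemma SG_R: "s \<in> S_G p E \<Longrightarrow> s \<in> RSigma p"
  unfolding S_G_def RSigma_Rv using princ_R[unfolded RSigma_Rv]
  by (auto intro!: Rv_prod Rv_power)

lemma SG_ev: "s \<in> S_G p E \<Longrightarrow> ev (Sp E theta0) s = 1"
  unfolding S_G_def by (auto simp: ev_hom.hom_prod ev_hom.hom_power ev_princ_theta0[OF fin_pa])

lemma SG_one: "1 \<in> S_G p E"
  unfolding S_G_def by (rule CollectI, rule exI[of _ "\<lambda>_. 0"]) simp

lemma SG_mult:
  assumes s: "s \<in> S_G p E" and j: "1 \<le> j" "j \<le> p"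
  shows "s * princ_det (pa E j) ^ d \<in> S_G p E"
proof -
  from s obtain k where k: "s = (\<Prod>i\<in>{1..p}. princ_det (pa E i) ^ k i)" by (auto simp: S_G_def)
  define k' where "k' i = k i + (if i = j then d else 0)" for i
  have "(\<Prod>i\<in>{1..p}. princ_det (pa E i) ^ k' i)
     = (\<Prod>i\<in>{1..p}. princ_det (pa E i) ^ k i) * (\<Prod>i\<in>{1..p}. princ_det (pa E i) ^ (if i = j then d else 0))"
    by (simp add: k'_def power_add prod.distrib)
  also have "(\<Prod>i\<in>{1..p}. princ_det (pa E i) ^ (if i = j then d else 0)) = princ_det (pa E j) ^ d"
  proof -
    have "(\<Prod>i\<in>{1..p}. princ_det (pa E i) ^ (if i = j then d else 0))
        = (\<Prod>i\<in>{1..p}. if i = j then princ_det (pa E i) ^ d else 1)"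
      by (rule prod.cong) auto
    also have "\<dots> = princ_det (pa E j) ^ d" using j by simp
    finally show ?thesis .
  qed
  finally have "s * princ_det (pa E j) ^ d = (\<Prod>i\<in>{1..p}. princ_det (pa E i) ^ k' i)" using k by simp
  then show ?thesis unfolding S_G_def by blast
qed

lemma elim: "\<forall>f\<in>Rv (W n). (\<forall>\<theta>. ev (Sp E \<theta>) f = 0) \<longrightarrow> (\<exists>s\<in>S_G p E. f * s \<in> I_G p E)"
proof (induction n)
  case 0
  have "W 0 = Free" by (simp add: W_def)
  show ?case
  proof (intro ballI impI)
    fix f assume "f \<in> Rv (W 0)" "\<forall>\<theta>. ev (Sp E \<theta>) f = 0"
    then have "f = 0" using base_case \<open>W 0 = Free\<close> by simp
    moreover have "0 \<in> I_G p E" by (rule mem_IG) (simp add: is_ideal_def)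
    ultimately show "\<exists>s\<in>S_G p E. f * s \<in> I_G p E" using SG_one by auto
  qed
next
  case (Suc n)
  show ?case
  proof (cases "\<exists>x\<in>Dep. rk x = n")
    case False
    then have "W (Suc n) = W n" by (auto simp: W_def less_Suc_eq)
    then show ?thesis using Suc.IH by simp
  next
    case True
    then obtain i j where x: "(i,j) \<in> Dep" "rk (i,j) = n" by auto
    have ij: "1 \<le> i" "i < j" "j \<le> p" using x by (auto simp: Dep_def)
    have WS: "W (Suc n) = insert (i,j) (W n)"
    proof
      show "W (Suc n) \<subseteq> insert (i,j) (W n)"
      proof
        fix d assume d: "d \<in> W (Suc n)"
        show "d \<in> insert (i,j) (W n)"
        proof (cases "d \<in> Dep \<and> rk d = n")
          case True
          obtain a b where ab: "d = (a,b)" by fastforce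
          have "a \<le> p" "i \<le> p" using True ab ij by (auto simp: Dep_def)
          then have "d = (i,j)" using rk_inj[of a i b j] True ab x(2) by simp
          then show ?thesis by simp
        next
          case False
          then show ?thesis using d by (auto simp: W_def less_Suc_eq)
        qed
      qed
      show "insert (i,j) (W n) \<subseteq> W (Suc n)" using x by (auto simp: W_def)
    qed
    show ?thesis
    proof (intro ballI impI)
      fix f assume f: "f \<in> Rv (W (Suc n))" and z: "\<forall>\<theta>. ev (Sp E \<theta>) f = 0"
      define c where "c = princ_det (pa E j)"
      define g where "g = cond_det i j (pa E j)"
      have cW: "c \<in> Rv (W n)" unfolding c_def by (rule princ_W) (use x ij in \<open>auto simp: rk_def\<close>)
      obtain h where h: "h \<in> Rv (W n)" "g = c * var (i,j) - h"
        using cond_decomp[OF x(1)] x(2) unfolding c_def g_def by blast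
      from divide_step[OF f[unfolded WS] cW h(1)] obtain d Q f' where
        dq: "c ^ d * f = Q * (c * var (i,j) - h) + f'" "Q \<in> Rv (insert (i,j) (W n))" "f' \<in> Rv (W n)"
        by blast
      have gz: "ev (Sp E \<theta>) g = 0" for \<theta> unfolding g_def by (rule ev_cond[OF x(1)])
      have "\<forall>\<theta>. ev (Sp E \<theta>) f' = 0"
      proof
        fix \<theta>
        have "f' = c ^ d * f - Q * g" using dq(1) h(2) by simp
        then show "ev (Sp E \<theta>) f' = 0" using z gz by (simp add: ev_hom.hom_minus ev_mult)
      qed
      with Suc.IH dq(3) obtain s' where s': "s' \<in> S_G p E" "f' * s' \<in> I_G p E" by blast
      define s where "s = s' * c ^ d"
      have sS: "s \<in> S_G p E" unfolding s_def c_def by (rule SG_mult[OF s'(1)]) (use ij in auto)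
      have QR: "Q \<in> RSigma p" unfolding RSigma_Rv using dq(2) W_U x(1) Dep_U
        by (meson Rv_mono insert_subset subsetD)
      have cf: "c ^ d * f = Q * g + f'" using dq(1) h(2) by simp
      have eq: "f * s = (s' * Q) * g + f' * s'"
      proof -
        have "f * s = s' * (c ^ d * f)" unfolding s_def by (simp add: mult_ac)
        also have "\<dots> = (s' * Q) * g + f' * s'" unfolding cf by (simp add: algebra_simps)
        finally show ?thesis .
      qed
      have "f * s \<in> I_G p E"
      proof (rule mem_IG)
        fix I assume I: "is_ideal (RSigma p) I" "gens \<subseteq> I"
        have "g \<in> gens" unfolding g_def gens_def using x(1) by (auto simp: Dep_def)
        then have "g \<in> I" using I(2) by blast
        moreover have "s' * Q \<in> RSigma p" using SG_R[OF s'(1)] QR unfolding RSigma_Rv by (rule Rv_mult)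
        ultimately have "(s' * Q) * g \<in> I" using I(1) unfolding is_ideal_def by blast
        moreover have "f' * s' \<in> I" using IG_sub[OF s'(2) I] .
        ultimately show "f * s \<in> I" unfolding eq using I(1) unfolding is_ideal_def by blast
      qed
      then show "\<exists>s\<in>S_G p E. f * s \<in> I_G p E" using sS by blast
    qed
  qed
qed

lemma U_W: "U \<subseteq> W ((p+1)*(p+1) + 1)"
proof
  fix v assume v: "v \<in> U"
  show "v \<in> W ((p+1)*(p+1) + 1)"
  proof (cases "v \<in> Free")
    case True then show ?thesis by (simp add: W_def)
  next
    case False
    then have d: "v \<in> Dep" using v U_eq by auto
    obtain a b where ab: "v = (a,b)" by fastforce
    have "a \<le> p" "b \<le> p" using d ab by (auto simp: Dep_def)
    then have "b * (p+1) + a \<le> p * (p+1) + p" by (intro add_mono mult_le_mono1)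
    then have "rk v < (p+1)*(p+1) + 1" using ab by (simp add: rk_def algebra_simps)
    then show ?thesis using d by (simp add: W_def)
  qed
qed

lemma PP_sat: "PP = saturation (RSigma p) (I_G p E) (S_G p E)"
proof
  show "PP \<subseteq> saturation (RSigma p) (I_G p E) (S_G p E)"
  proof
    fix f assume f: "f \<in> PP"
    then have "f \<in> Rv (W ((p+1)*(p+1) + 1))" using U_W Rv_mono unfolding PP_def RSigma_Rv by blast
    then have "\<exists>s\<in>S_G p E. f * s \<in> I_G p E" using elim f unfolding PP_def by blast
    then show "f \<in> saturation (RSigma p) (I_G p E) (S_G p E)" using f unfolding saturation_def PP_def by blast
  qed
  show "saturation (RSigma p) (I_G p E) (S_G p E) \<subseteq> PP"
  proof
    fix f assume "f \<in> saturation (RSigma p) (I_G p E) (S_G p E)"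
    then obtain s where fs: "f \<in> RSigma p" "s \<in> S_G p E" "f * s \<in> I_G p E" unfolding saturation_def by blast
    then have "f * s \<in> PP" using IG_PP by blast
    then have "\<forall>\<theta>. ev (Sp E \<theta>) (f * s) = 0" unfolding PP_def by blast
    then have "\<forall>\<theta>. ev (Sp E \<theta>) f * ev (Sp E \<theta>) s = 0" by (simp add: ev_mult)
    moreover have "\<not> (\<forall>\<theta>. ev (Sp E \<theta>) s = 0)" using SG_ev[OF fs(2)] by (metis one_neq_zero)
    ultimately have "\<forall>\<theta>. ev (Sp E \<theta>) f = 0" using pf_domain[OF pf_ev_S pf_ev_S] by blast
    then show "f \<in> PP" using fs(1) unfolding PP_def by blast
  qed
qed

lemma PP_prime: "is_prime_ideal (RSigma p) PP"
  unfolding is_prime_ideal_def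
proof (intro conjI ballI impI)
  show "is_ideal (RSigma p) PP" by (rule PP_ideal)
  show "PP \<noteq> RSigma p"
  proof
    assume "PP = RSigma p"
    then have "(1::rpoly) \<in> PP" unfolding RSigma_Rv by simp
    then show False unfolding PP_def by simp
  qed
  fix a b assume ab: "a \<in> RSigma p" "b \<in> RSigma p" "a * b \<in> PP"
  then have "\<forall>\<theta>. ev (Sp E \<theta>) a * ev (Sp E \<theta>) b = 0" unfolding PP_def by (simp add: ev_mult)
  then have "(\<forall>\<theta>. ev (Sp E \<theta>) a = 0) \<or> (\<forall>\<theta>. ev (Sp E \<theta>) b = 0)"
    using pf_domain[OF pf_ev_S pf_ev_S] by blast
  then show "a \<in> PP \<or> b \<in> PP" using ab unfolding PP_def by blast
qed

end

theorem mainTheorem10: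
  fixes p :: nat and E :: "(nat \<times> nat) set"
  assumes "nat_ordered_dag p E"
  shows "is_prime_ideal (RSigma p) (saturation (RSigma p) (I_G p E) (S_G p E))"
proof -
  interpret dag p E using assms by unfold_locales
  show ?thesis using PP_prime PP_sat by simp
qed


end
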